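(* Let $\mathcal{G}^s$ be an SCG and consider the effect $P(y_t\mid \text{do}(x^1_{t-\gamma_1}),\dots,\text{do}(x^n_{t-\gamma_n}))$, and assume that no $\mathcal{G}^f\in\mathcal{C}(\mathcal{G}^s)$ contains, for any $i$, a directed path from $Y_t$ to $X^i_{t-\gamma_i}$ which remains in $\mathcal{NC}\cup\{X^i_{t-\gamma_i}\}$. The following are equivalent: 1. There exist an intervention $X^i_{t-\gamma_i}$, a vertex $F_{t_f}\in\mathcal{V}^f$ and a candidate FTCG $\mathcal{G}^f\in\mathcal{C}(\mathcal{G}^s)$ containing a path $X^i_{t-\gamma_i}\leftsquigarrow F_{t_f}\rightsquigarrow Y_t$ (the concatenation of a directed path from $F_{t_f}$ to $X^i_{t-\gamma_i}$ and a directed path from $F_{t_f}$ to $Y_t$) which remains in $\mathcal{NC}\cup\{X^i_{t-\gamma_i}\}$. 2. There exist an intervention $X^i_{t-\gamma_i}$ and $F_{t_f}\in\mathcal{V}^f$ such that $F_{t_f}$ is both $X^i_{t-\gamma_i}$-$\mathcal{NC}$-accessible and $Y_t$-$\mathcal{NC}$-accessible.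
   Context: Let $\mathcal{V}$ be a finite set of time series, $\mathcal{V}^f=\{X_s: X\in\mathcal{V},s\in\mathbb{Z}\}$. An FTCG is a DAG on $\mathcal{V}^f$ whose edges $X_s\to Z_{s'}$ satisfy $s\le s'$. The SCG reduced from an FTCG $\mathcal{G}^f$ is $\mathcal{G}^s=(\mathcal{V}^s,\mathcal{E}^s)$, $\mathcal{V}^s=\mathcal{V}$, with $X\to Z$ iff $\mathcal{G}^f$ has an edge $X_{s-\gamma}\to Z_s$ with $\gamma\ge0$. An SCG is a graph reduced from some FTCG; $\mathcal{C}(\mathcal{G}^s)$ is the class of candidate FTCGs (those from which $\mathcal{G}^s$ is reduced). Paths have distinct vertices; descendants are via directed paths (a vertex is its own descendant). A path from set $\mathbf{A}$ to $\mathbf{B}$ is proper if only its first vertex is in $\mathbf{A}$. A path remains in a set $S$ if all its vertices are in $S$. $\text{Forb}(\mathbf{X},\mathbf{Y},\mathcal{G})$ is the set of all descendants of any $W\notin\mathbf{X}$ lying on a proper directed path from $\mathbf{X}$ to $\mathbf{Y}$. Effect setup: fix $Y\in\mathcal{V}^s$, a time $t$, interventions $X^1_{t-\gamma_1},\dots,X^n_{t-\gamma_n}$ (distinct vertices of $\mathcal{V}^f$), with standing assumptions $\gamma_i\ge0$ and $Y$ a descendant of every $X^i$ in $\mathcal{G}^s$. $\mathcal{X}^f=\{X^i_{t-\gamma_i}\}_i$. $\mathcal{CF}=\bigcup_{\mathcal{G}^f\in\mathcal{C}(\mathcal{G}^s)}\text{Forb}(\mathcal{X}^f,Y_t,\mathcal{G}^f)$,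 $\mathcal{NC}=\mathcal{CF}\setminus\mathcal{X}^f$. For $V_{t_v}\in\mathcal{V}^f$, a vertex $F_{t_1}\in\mathcal{V}^f\setminus\{V_{t_v}\}$ is $V_{t_v}$-$\mathcal{NC}$-accessible if some candidate FTCG contains a directed path from $F_{t_1}$ to $V_{t_v}$ all of whose vertices, except possibly $V_{t_v}$, lie in $\mathcal{NC}$. *)

theory Defs
  imports Main
begin

text \<open>Vertices of a full-time causal graph (FTCG): a time series together with an integer time.\<close>
type_synonym 'v vtx = "'v \<times> int"

definition is_FTCG :: "'v set \<Rightarrow> ('v vtx \<times> 'v vtx) set \<Rightarrow> bool" where
  "is_FTCG V E \<longleftrightarrow> E \<subseteq> (V \<times> UNIV) \<times> (V \<times> UNIV) \<and> acyclic E
     \<and> (\<forall>a b. (a, b) \<in> E \<longrightarrow> snd a \<le> snd b)"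

definition reduce :: "('v vtx \<times> 'v vtx) set \<Rightarrow> ('v \<times> 'v) set" where
  "reduce E = {(X, Z). \<exists>s \<gamma>. \<gamma> \<ge> 0 \<and> ((X, s - \<gamma>), (Z, s)) \<in> E}"

definition is_SCG :: "'v set \<Rightarrow> ('v \<times> 'v) set \<Rightarrow> bool" where
  "is_SCG V Es \<longleftrightarrow> (\<exists>E. is_FTCG V E \<and> reduce E = Es)"

definition candidates :: "'v set \<Rightarrow> ('v \<times> 'v) set \<Rightarrow> ('v vtx \<times> 'v vtx) set set" where
  "candidates V Es = {E. is_FTCG V E \<and> reduce E = Es}"

definition dpath :: "('a \<times> 'a) set \<Rightarrow> 'a list \<Rightarrow> bool" where
  "dpath E p \<longleftrightarrow> p \<noteq> [] \<and> distinct p \<and> (\<forall>i < length p - 1. (p ! i, p ! Suc i) \<in> E)"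

definition dpath_from_to :: "('a \<times> 'a) set \<Rightarrow> 'a \<Rightarrow> 'a \<Rightarrow> 'a list \<Rightarrow> bool" where
  "dpath_from_to E a b p \<longleftrightarrow> dpath E p \<and> hd p = a \<and> last p = b"

definition descendants :: "('a \<times> 'a) set \<Rightarrow> 'a \<Rightarrow> 'a set" where
  "descendants E w = {d. \<exists>p. dpath_from_to E w d p}"

definition proper_dpath :: "('a \<times> 'a) set \<Rightarrow> 'a set \<Rightarrow> 'a set \<Rightarrow> 'a list \<Rightarrow> bool" where
  "proper_dpath E A B p \<longleftrightarrow> dpath E p \<and> hd p \<in> A \<and> last p \<in> B \<and> (\<forall>v \<in> set (tl p). v \<notin> A)"

definition Forb :: "('a \<times> 'a) set \<Rightarrow> 'a set \<Rightarrow> 'a set \<Rightarrow> 'a set" where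
  "Forb E A B = \<Union> {descendants E w | w. w \<notin> A \<and> (\<exists>p. proper_dpath E A B p \<and> w \<in> set p)}"

definition CF :: "'v set \<Rightarrow> ('v \<times> 'v) set \<Rightarrow> 'v vtx set \<Rightarrow> 'v vtx \<Rightarrow> 'v vtx set" where
  "CF V Es Xf y = (\<Union>E \<in> candidates V Es. Forb E Xf {y})"

definition NC :: "'v set \<Rightarrow> ('v \<times> 'v) set \<Rightarrow> 'v vtx set \<Rightarrow> 'v vtx \<Rightarrow> 'v vtx set" where
  "NC V Es Xf y = CF V Es Xf y - Xf"

definition accessible :: "'v set \<Rightarrow> ('v \<times> 'v) set \<Rightarrow> 'v vtx set \<Rightarrow> 'v vtx \<Rightarrow> 'v vtx \<Rightarrow> bool" where
  "accessible V Es N F v \<longleftrightarrow> F \<noteq> v \<and>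
     (\<exists>E \<in> candidates V Es. \<exists>p. dpath_from_to E F v p \<and> (\<forall>u \<in> set (butlast p). u \<in> N))"

end

theory Submission
  imports Defs
begin

lemma dpath_drop:
  assumes "dpath E p" "k < length p"
  shows "dpath E (drop k p)"
  using assms unfolding dpath_def by (auto simp: add.commute)

lemma least_idx:
  assumes "distinct q" "k < length q"
  shows "(LEAST j. j < length q \<and> q ! j = q ! k) = k"
  apply (rule Least_equality)
  using assms by (auto simp: nth_eq_iff_index_eq)

lemma reduce_mono: "E \<subseteq> E' \<Longrightarrow> reduce E \<subseteq> reduce E'"
  unfolding reduce_def by blast

lemma fork:
  assumes EsV: "Es \<subseteq> Vs \<times> Vs"
    and E1: "E1 \<in> candidates Vs Es" and E2: "E2 \<in> candidates Vs Es"
    and q1: "dpath_from_to E1 F x q1" and q2: "dpath_from_to E2 F y q2"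
  shows "\<exists>E \<in> candidates Vs Es. \<exists>v p1 p2. dpath_from_to E v x p1 \<and> dpath_from_to E v y p2
     \<and> distinct (rev p1 @ tl p2) \<and> set p1 \<subseteq> set q1 \<and> set p2 \<subseteq> set q2"
proof -
  have dq1: "dpath E1 q1" "hd q1 = F" "last q1 = x" using q1 unfolding dpath_from_to_def by auto
  have dq2: "dpath E2 q2" "hd q2 = F" "last q2 = y" using q2 unfolding dpath_from_to_def by auto
  have ne1: "q1 \<noteq> []" and ne2: "q2 \<noteq> []" and dist1: "distinct q1" and dist2: "distinct q2"
    using dq1 dq2 unfolding dpath_def by auto
  define K where "K = {k. k < length q1 \<and> q1 ! k \<in> set q2}"
  have finK: "finite K" unfolding K_def by auto
  have "q1 ! 0 = F" using ne1 dq1 by (simp add: hd_conv_nth[symmetric])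
  moreover have "F \<in> set q2" using ne2 dq2 hd_in_set by metis
  ultimately have "0 \<in> K" unfolding K_def using ne1 by simp
  define k where "k = Max K"
  have kK: "k \<in> K" unfolding k_def using finK \<open>0 \<in> K\<close> Max_in by blast
  have kmax: "\<And>m. m < length q1 \<Longrightarrow> q1 ! m \<in> set q2 \<Longrightarrow> m \<le> k"
    unfolding k_def using finK K_def by auto
  have klt: "k < length q1" and kin: "q1 ! k \<in> set q2" using kK K_def by auto
  obtain j where jlt: "j < length q2" and jeq: "q2 ! j = q1 ! k" using kin by (metis in_set_conv_nth)
  define v where "v = q1 ! k"
  define p1 where "p1 = drop k q1"
  define p2 where "p2 = drop j q2"
  have dp1: "dpath E1 p1" unfolding p1_def using dpath_drop dq1 klt by blast
  have dp2: "dpath E2 p2" unfolding p2_def using dpath_drop dq2 jlt by blast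
  have hp1: "hd p1 = v" "last p1 = x" unfolding p1_def v_def using klt dq1
    by (auto simp: hd_drop_conv_nth)
  have hp2: "hd p2 = v" "last p2 = y" unfolding p2_def v_def using jlt dq2 jeq
    by (auto simp: hd_drop_conv_nth)
  have p10: "p1 ! 0 = v" unfolding p1_def v_def using klt by simp
  have p20: "p2 ! 0 = v" unfolding p2_def v_def using jlt jeq by simp
  have dpp1: "distinct p1" "p1 \<noteq> []" using dp1 dpath_def by auto
  have dpp2: "distinct p2" "p2 \<noteq> []" using dp2 dpath_def by auto
  have disj: "\<And>u. u \<in> set p1 \<Longrightarrow> u \<in> set p2 \<Longrightarrow> u = v"
  proof -
    fix u assume u1: "u \<in> set p1" and u2: "u \<in> set p2"
    obtain i where "i < length p1" "p1 ! i = u" using u1 by (metis in_set_conv_nth)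
    hence m: "k + i < length q1" "q1 ! (k + i) = u" unfolding p1_def by auto
    have "u \<in> set q2" using u2 unfolding p2_def by (meson in_set_dropD)
    hence "k + i \<le> k" using kmax m by blast
    thus "u = v" using m v_def by simp
  qed
  define T where "T = {(p1 ! i, p1 ! Suc i) | i. i < length p1 - 1} \<union> {(p2 ! i, p2 ! Suc i) | i. i < length p2 - 1}"
  define Fl where "Fl = {((A, s - 1), (B, s)) | A B (s::int). (A, B) \<in> Es}"
  define E where "E = Fl \<union> T"
  have TE12: "T \<subseteq> E1 \<union> E2" unfolding T_def using dp1 dp2 unfolding dpath_def by auto
  have isF1: "is_FTCG Vs E1" "reduce E1 = Es" and isF2: "is_FTCG Vs E2" "reduce E2 = Es"
    using E1 E2 unfolding candidates_def by auto
  have sub: "E \<subseteq> (Vs \<times> UNIV) \<times> (Vs \<times> UNIV)"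
  proof -
    have "Fl \<subseteq> (Vs \<times> UNIV) \<times> (Vs \<times> UNIV)" unfolding Fl_def using EsV by auto
    moreover have "E1 \<union> E2 \<subseteq> (Vs \<times> UNIV) \<times> (Vs \<times> UNIV)" using isF1 isF2 unfolding is_FTCG_def by auto
    ultimately show ?thesis unfolding E_def using TE12 by blast
  qed
  have mono: "\<forall>a b. (a, b) \<in> E \<longrightarrow> snd a \<le> snd b"
  proof -
    have "\<forall>a b. (a, b) \<in> E1 \<union> E2 \<longrightarrow> snd a \<le> snd b" using isF1 isF2 unfolding is_FTCG_def by auto
    moreover have "\<forall>a b. (a, b) \<in> Fl \<longrightarrow> snd a \<le> snd b" unfolding Fl_def by auto
    ultimately show ?thesis unfolding E_def using TE12 by blast
  qed
  have red: "reduce E = Es"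
  proof
    have "reduce Fl \<subseteq> Es" unfolding reduce_def Fl_def by auto
    moreover have "reduce T \<subseteq> Es"
    proof -
      have "reduce (E1 \<union> E2) = reduce E1 \<union> reduce E2" unfolding reduce_def by blast
      thus ?thesis using reduce_mono[OF TE12] isF1 isF2 by simp
    qed
    ultimately show "reduce E \<subseteq> Es" unfolding E_def reduce_def by blast
    show "Es \<subseteq> reduce E"
    proof
      fix z assume "z \<in> Es"
      then obtain A B where z: "z = (A, B)" "(A, B) \<in> Es" by (cases z) auto
      hence "((A, 0 - 1), (B, 0)) \<in> E" unfolding E_def Fl_def by blast
      hence "\<exists>s \<gamma>. \<gamma> \<ge> 0 \<and> ((A, s - \<gamma>), (B, s)) \<in> E" by (intro exI[of _ "0::int"] exI[of _ "1::int"]) simp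
      thus "z \<in> reduce E" unfolding reduce_def z by simp
    qed
  qed
  define pos where "pos u = (if u \<in> set p1 then (LEAST j. j < length p1 \<and> p1 ! j = u)
      else (LEAST j. j < length p2 \<and> p2 ! j = u))" for u
  have pos1: "\<And>i. i < length p1 \<Longrightarrow> pos (p1 ! i) = i"
    unfolding pos_def using least_idx dpp1 by auto
  have pos2: "\<And>i. i < length p2 \<Longrightarrow> pos (p2 ! i) \<le> i"
  proof -
    fix i assume i: "i < length p2"
    show "pos (p2 ! i) \<le> i"
    proof (cases "p2 ! i \<in> set p1")
      case True
      hence "p2 ! i = v" using disj i by auto
      hence "i = 0" using p20 dpp2 i nth_eq_iff_index_eq by fastforce
      moreover have "pos v = 0" using pos1[of 0] p10 dpp1 by simp
      ultimately show ?thesis using p20 by simp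
    next
      case False
      thus ?thesis unfolding pos_def using least_idx[OF dpp2(1) i] by simp
    qed
  qed
  have pos2s: "\<And>i. Suc i < length p2 \<Longrightarrow> pos (p2 ! Suc i) = Suc i"
  proof -
    fix i assume i: "Suc i < length p2"
    have "p2 ! Suc i \<notin> set p1"
    proof
      assume "p2 ! Suc i \<in> set p1"
      hence "p2 ! Suc i = p2 ! 0" using disj i p20 by auto
      thus False using dpp2 i nth_eq_iff_index_eq by fastforce
    qed
    thus "pos (p2 ! Suc i) = Suc i" unfolding pos_def using least_idx[OF dpp2(1) i] by simp
  qed
  define R where "R = {(a, b). snd a < snd b \<or> (snd a = snd b \<and> pos a < pos b)}"
  have transR: "trans R" unfolding R_def trans_def by auto
  have ER: "E \<subseteq> R"
  proof
    fix e assume eE: "e \<in> E"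
    then obtain a b where e: "e = (a, b)" by (cases e)
    have le: "snd a \<le> snd b" using mono eE e by blast
    show "e \<in> R"
    proof (cases "e \<in> Fl")
      case True
      thus ?thesis unfolding Fl_def R_def e by auto
    next
      case False
      hence "e \<in> T" using eE E_def by auto
      then consider i where "i < length p1 - 1" "a = p1 ! i" "b = p1 ! Suc i"
        | i where "i < length p2 - 1" "a = p2 ! i" "b = p2 ! Suc i"
        unfolding T_def e by auto
      hence "pos a < pos b"
      proof cases
        case 1 thus ?thesis using pos1 by auto
      next
        case 2
        hence "Suc i < length p2" by simp
        hence "pos a \<le> i" "pos b = Suc i" using pos2[of i] pos2s[of i] 2 by auto
        thus ?thesis by simp
      qed
      thus ?thesis unfolding R_def e using le by auto
    qed
  qed
  have acyc: "acyclic E"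
  proof -
    have "E\<^sup>+ \<subseteq> R" using trancl_mono ER transR trancl_id by (metis subsetI)
    thus ?thesis unfolding acyclic_def R_def by auto
  qed
  have cand: "E \<in> candidates Vs Es"
    unfolding candidates_def is_FTCG_def using sub acyc mono red by auto
  have "dpath E p1" using dp1 unfolding dpath_def E_def T_def by blast
  hence pp1: "dpath_from_to E v x p1" using hp1 unfolding dpath_from_to_def by auto
  have "dpath E p2" using dp2 unfolding dpath_def E_def T_def by blast
  hence pp2: "dpath_from_to E v y p2" using hp2 unfolding dpath_from_to_def by auto
  have "distinct (rev p1 @ tl p2)"
  proof -
    have "set p1 \<inter> set (tl p2) = {}"
    proof (rule ccontr)
      assume "set p1 \<inter> set (tl p2) \<noteq> {}"
      then obtain u where u: "u \<in> set p1" "u \<in> set (tl p2)" by blast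
      hence "u \<in> set p2" by (meson list.set_sel(2) dpp2(2))
      hence "u = v" using disj u by auto
      moreover have "v \<notin> set (tl p2)" using dpp2 hp2
        by (metis distinct.simps(2) list.collapse)
      ultimately show False using u by simp
    qed
    thus ?thesis using dpp1 dpp2 by (simp add: distinct_tl)
  qed
  moreover have "set p1 \<subseteq> set q1" unfolding p1_def by (simp add: set_drop_subset)
  moreover have "set p2 \<subseteq> set q2" unfolding p2_def by (simp add: set_drop_subset)
  ultimately show ?thesis using cand pp1 pp2 by blast
qed


lemma last_notin_butlast: "distinct p \<Longrightarrow> p \<noteq> [] \<Longrightarrow> last p \<notin> set (butlast p)"
  by (metis append_butlast_last_id distinct_append disjoint_iff list.set_intros(1))

lemma set_butlast_last: "p \<noteq> [] \<Longrightarrow> set p = set (butlast p) \<union> {last p}"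
  by (metis append_butlast_last_id set_append empty_set list.simps(15))

lemma hd_in_butlast: "p \<noteq> [] \<Longrightarrow> hd p \<noteq> last p \<Longrightarrow> hd p \<in> set (butlast p)"
  by (cases p) auto

lemma dpath_single: "dpath_from_to E a a [a]"
  unfolding dpath_from_to_def dpath_def by simp

theorem lemma3:
  fixes Vs :: "'v set" and Es :: "('v \<times> 'v) set" and Y :: 'v and t :: int
    and n :: nat and X :: "nat \<Rightarrow> 'v" and \<gamma> :: "nat \<Rightarrow> int"
  assumes "finite Vs"
    and "is_SCG Vs Es"
    and "Y \<in> Vs"
    and "\<forall>i<n. X i \<in> Vs"
    and "inj_on (\<lambda>i. (X i, t - \<gamma> i)) {..<n}"
    and "\<forall>i<n. \<gamma> i \<ge> 0"
    and "\<forall>i<n. (X i, Y) \<in> Es\<^sup>*"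
    and "\<forall>i<n. \<forall>E \<in> candidates Vs Es. \<not> (\<exists>p. dpath_from_to E (Y, t) (X i, t - \<gamma> i) p \<and>
            set p \<subseteq> NC Vs Es ((\<lambda>i. (X i, t - \<gamma> i)) ` {..<n}) (Y, t) \<union> {(X i, t - \<gamma> i)})"
  shows "(\<exists>i<n. \<exists>F. \<exists>E \<in> candidates Vs Es. \<exists>p1 p2.
            F \<noteq> (X i, t - \<gamma> i) \<and> F \<noteq> (Y, t) \<and>
            dpath_from_to E F (X i, t - \<gamma> i) p1 \<and> dpath_from_to E F (Y, t) p2 \<and>
            distinct (rev p1 @ tl p2) \<and>
            set (p1 @ p2) \<subseteq> NC Vs Es ((\<lambda>i. (X i, t - \<gamma> i)) ` {..<n}) (Y, t) \<union> {(X i, t - \<gamma> i)})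
     \<longleftrightarrow>
         (\<exists>i<n. \<exists>F.
            accessible Vs Es (NC Vs Es ((\<lambda>i. (X i, t - \<gamma> i)) ` {..<n}) (Y, t)) F (X i, t - \<gamma> i) \<and>
            accessible Vs Es (NC Vs Es ((\<lambda>i. (X i, t - \<gamma> i)) ` {..<n}) (Y, t)) F (Y, t))"
proof -
  define Xf where "Xf = (\<lambda>i. (X i, t - \<gamma> i)) ` {..<n}"
  define N where "N = NC Vs Es Xf (Y, t)"
  define xx where "xx i = (X i, t - \<gamma> i)" for i
  have h8: "\<And>i E p. i < n \<Longrightarrow> E \<in> candidates Vs Es \<Longrightarrow> dpath_from_to E (Y, t) (xx i) p
      \<Longrightarrow> set p \<subseteq> N \<union> {xx i} \<Longrightarrow> False"
    using assms(8) unfolding N_def Xf_def xx_def by blast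
  obtain E0 where E0: "E0 \<in> candidates Vs Es" using assms(2) unfolding is_SCG_def candidates_def by blast
  have EsV: "Es \<subseteq> Vs \<times> Vs"
    using E0 unfolding candidates_def is_FTCG_def reduce_def by blast
  have ynx: "\<And>i. i < n \<Longrightarrow> (Y, t) \<noteq> xx i"
  proof
    fix i assume i: "i < n" and eq: "(Y, t) = xx i"
    have "dpath_from_to E0 (Y, t) (xx i) [(Y, t)]" using dpath_single[of E0 "(Y, t)"] eq by simp
    moreover have "set [(Y, t)] \<subseteq> N \<union> {xx i}" using eq by simp
    ultimately show False using h8[OF i E0] by blast
  qed
  have ynXf: "(Y, t) \<notin> Xf" using ynx unfolding Xf_def xx_def by auto
  have xnN: "\<And>i. i < n \<Longrightarrow> xx i \<notin> N" unfolding N_def NC_def Xf_def xx_def by auto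
  have "(\<exists>i<n. \<exists>F. \<exists>E \<in> candidates Vs Es. \<exists>p1 p2.
            F \<noteq> xx i \<and> F \<noteq> (Y, t) \<and>
            dpath_from_to E F (xx i) p1 \<and> dpath_from_to E F (Y, t) p2 \<and>
            distinct (rev p1 @ tl p2) \<and> set (p1 @ p2) \<subseteq> N \<union> {xx i})
     \<longleftrightarrow> (\<exists>i<n. \<exists>F. accessible Vs Es N F (xx i) \<and> accessible Vs Es N F (Y, t))"
  proof
    assume "\<exists>i<n. \<exists>F. \<exists>E \<in> candidates Vs Es. \<exists>p1 p2.
            F \<noteq> xx i \<and> F \<noteq> (Y, t) \<and>
            dpath_from_to E F (xx i) p1 \<and> dpath_from_to E F (Y, t) p2 \<and>
            distinct (rev p1 @ tl p2) \<and> set (p1 @ p2) \<subseteq> N \<union> {xx i}"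
    then obtain i F E p1 p2 where i: "i < n" and E: "E \<in> candidates Vs Es"
      and F: "F \<noteq> xx i" "F \<noteq> (Y, t)" and p1: "dpath_from_to E F (xx i) p1"
      and p2: "dpath_from_to E F (Y, t) p2" and dst: "distinct (rev p1 @ tl p2)"
      and sp: "set (p1 @ p2) \<subseteq> N \<union> {xx i}" by blast
    have d1: "distinct p1" "p1 \<noteq> []" "hd p1 = F" "last p1 = xx i"
      using p1 unfolding dpath_from_to_def dpath_def by auto
    have d2: "distinct p2" "p2 \<noteq> []" "hd p2 = F" "last p2 = (Y, t)"
      using p2 unfolding dpath_from_to_def dpath_def by auto
    have a1: "accessible Vs Es N F (xx i)"
      unfolding accessible_def
    proof (intro conjI bexI exI)
      show "F \<noteq> xx i" by fact
      show "E \<in> candidates Vs Es" by fact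
      show "dpath_from_to E F (xx i) p1" by fact
      show "\<forall>u\<in>set (butlast p1). u \<in> N"
      proof
        fix u assume u: "u \<in> set (butlast p1)"
        hence "u \<noteq> xx i" using last_notin_butlast[OF d1(1,2)] d1(4) by auto
        moreover have "u \<in> set p1" using u in_set_butlastD by metis
        ultimately show "u \<in> N" using sp by auto
      qed
    qed
    have xnp2: "xx i \<notin> set p2"
    proof
      assume "xx i \<in> set p2"
      moreover have "xx i \<noteq> hd p2" using F d2 by simp
      ultimately have "xx i \<in> set (tl p2)" using d2(2) by (metis list.collapse set_ConsD)
      moreover have "xx i \<in> set (rev p1)" using d1 last_in_set by fastforce
      ultimately show False using dst by auto
    qed
    have a2: "accessible Vs Es N F (Y, t)"
      unfolding accessible_def
    proof (intro conjI bexI exI)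
      show "F \<noteq> (Y, t)" by fact
      show "E \<in> candidates Vs Es" by fact
      show "dpath_from_to E F (Y, t) p2" by fact
      show "\<forall>u\<in>set (butlast p2). u \<in> N"
      proof
        fix u assume u: "u \<in> set (butlast p2)"
        hence "u \<in> set p2" using in_set_butlastD by metis
        thus "u \<in> N" using sp xnp2 by auto
      qed
    qed
    show "\<exists>i<n. \<exists>F. accessible Vs Es N F (xx i) \<and> accessible Vs Es N F (Y, t)"
      using i a1 a2 by blast
  next
    assume "\<exists>i<n. \<exists>F. accessible Vs Es N F (xx i) \<and> accessible Vs Es N F (Y, t)"
    then obtain i F where i: "i < n" and a1: "accessible Vs Es N F (xx i)"
      and a2: "accessible Vs Es N F (Y, t)" by blast
    obtain E1 q1 where E1: "E1 \<in> candidates Vs Es" and Fx: "F \<noteq> xx i"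
      and q1: "dpath_from_to E1 F (xx i) q1" and bq1: "\<forall>u\<in>set (butlast q1). u \<in> N"
      using a1 unfolding accessible_def by blast
    obtain E2 q2 where E2: "E2 \<in> candidates Vs Es" and Fy: "F \<noteq> (Y, t)"
      and q2: "dpath_from_to E2 F (Y, t) q2" and bq2: "\<forall>u\<in>set (butlast q2). u \<in> N"
      using a2 unfolding accessible_def by blast
    have d1: "distinct q1" "q1 \<noteq> []" "hd q1 = F" "last q1 = xx i" "dpath E1 q1"
      using q1 unfolding dpath_from_to_def dpath_def by auto
    have d2: "distinct q2" "q2 \<noteq> []" "hd q2 = F" "last q2 = (Y, t)"
      using q2 unfolding dpath_from_to_def dpath_def by auto
    have FN: "F \<in> N" using hd_in_butlast[OF d2(2)] d2 Fy bq2 by auto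
    have yN: "(Y, t) \<in> N"
    proof -
      from FN obtain E3 where E3: "E3 \<in> candidates Vs Es" and "F \<in> Forb E3 Xf {(Y, t)}"
        unfolding N_def NC_def CF_def by blast
      then obtain w p where "proper_dpath E3 Xf {(Y, t)} p" unfolding Forb_def by blast
      moreover have "p \<noteq> []" "last p = (Y, t)" using calculation unfolding proper_dpath_def dpath_def by auto
      ultimately have pp: "proper_dpath E3 Xf {(Y, t)} p" "(Y, t) \<in> set p"
        using last_in_set by metis+
      have "(Y, t) \<in> descendants E3 (Y, t)" unfolding descendants_def using dpath_single[of E3 "(Y, t)"] by blast
      hence "(Y, t) \<in> Forb E3 Xf {(Y, t)}" unfolding Forb_def using pp ynXf by blast
      thus ?thesis unfolding N_def NC_def CF_def using E3 ynXf by blast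
    qed
    have sq1: "set q1 \<subseteq> N \<union> {xx i}" using set_butlast_last[OF d1(2)] bq1 d1(4) by auto
    have sq2: "set q2 \<subseteq> N" using set_butlast_last[OF d2(2)] bq2 d2(4) yN by auto
    have xq2: "xx i \<notin> set q2" using sq2 xnN[OF i] by auto
    have yq1: "(Y, t) \<notin> set q1"
    proof
      assume "(Y, t) \<in> set q1"
      then obtain k where k: "k < length q1" "q1 ! k = (Y, t)" by (metis in_set_conv_nth)
      have "dpath_from_to E1 (Y, t) (xx i) (drop k q1)"
        unfolding dpath_from_to_def using dpath_drop[OF d1(5) k(1)] k d1
        by (simp add: hd_drop_conv_nth)
      moreover have "set (drop k q1) \<subseteq> N \<union> {xx i}" using sq1 set_drop_subset by fast
      ultimately show False using h8[OF i E1] by blast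
    qed
    obtain E v p1 p2 where E: "E \<in> candidates Vs Es" and p1: "dpath_from_to E v (xx i) p1"
      and p2: "dpath_from_to E v (Y, t) p2" and dst: "distinct (rev p1 @ tl p2)"
      and s1: "set p1 \<subseteq> set q1" and s2: "set p2 \<subseteq> set q2"
      using fork[OF EsV E1 E2 q1 q2] by blast
    have "v \<in> set p1" using p1 unfolding dpath_from_to_def dpath_def by auto
    hence vy: "v \<noteq> (Y, t)" using s1 yq1 by auto
    have "v \<in> set p2" using p2 unfolding dpath_from_to_def dpath_def by auto
    hence vx: "v \<noteq> xx i" using s2 xq2 by auto
    have "set (p1 @ p2) \<subseteq> N \<union> {xx i}" using s1 s2 sq1 sq2 by auto
    thus "\<exists>i<n. \<exists>F. \<exists>E \<in> candidates Vs Es. \<exists>p1 p2.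
            F \<noteq> xx i \<and> F \<noteq> (Y, t) \<and>
            dpath_from_to E F (xx i) p1 \<and> dpath_from_to E F (Y, t) p2 \<and>
            distinct (rev p1 @ tl p2) \<and> set (p1 @ p2) \<subseteq> N \<union> {xx i}"
      using i E vx vy p1 p2 dst by blast
  qed
  thus ?thesis unfolding N_def Xf_def xx_def .
qed

end
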